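(* Let $F$ be a semi-flow on a connected metrizable space $X$ and let $\{S_\alpha\}$ be a collection of $F$-$\Omega$streams. Then: (1) $S_\cap=\bigcap_\alpha S_\alpha$ is an $F$-$\Omega$stream; (2) $\mathcal{R}_{S_\cap}=\bigcap_\alpha\mathcal{R}_{S_\alpha}$; (3) for every node $N$ of $S_\cap$, if $N_\alpha$ denotes the node of $S_\alpha$ containing $N$, then $N=\bigcap_\alpha N_\alpha$.
   Context: A semi-flow on $X$ is a continuous map $F:\mathbb{T}\times X\to X$, $(t,x)\mapsto F^t(x)$, where $\mathbb{T}=\{0,1,2,\dots\}$ or $[0,\infty)$, with $F^0=\mathrm{id}$ and $F^{t_1+t_2}=F^{t_2}\circ F^{t_1}$. Put $\mathcal{O}_F(x)=\{F^t(x)\}$ and $\mathcal{O}_F=\{(x,y):y\in\mathcal{O}_F(x)\}$. An $F$-stream is a reflexive, transitive relation $S$ that is closed in $X\times X$ and contains $\mathcal{O}_F$; write $x\succcurlyeq_S y$ for $(x,y)\in S$ and $\mathrm{Down}_S(x)=\{y:x\succcurlyeq_S y\}$. $S$ is an $\Omega$stream if $\mathrm{Down}_S(x)=\mathcal{O}_F(x)\cup\mathrm{Down}_S(y)$ for every $x$ and every $y\in\mathcal{O}_F(x)$. Write $x\overset{S}{=}y$ if $x\succcurlyeq_S y$ and $y\succcurlyeq_S x$. A point $x$ is $S$-recurrent if $\mathcal{O}_F(x)=\{x\}$ or there is $y\ne x$ with $x\overset{S}{=}y$, and $\mathcal{R}_S$ is the set of such points. The nodes of $S$ are the $\overset{S}{=}$-equivalence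 classes of $\mathcal{R}_S$. *)

theory Defs
  imports "HOL-Analysis.Analysis"
begin

text \<open>Time domain: T is either the set of naturals (embedded in the reals)
  or [0,\<infinity>). A semi-flow is F :: real \<Rightarrow> 'a \<Rightarrow> 'a, of which only the values on T matter.\<close>

definition semiflow :: "real set \<Rightarrow> (real \<Rightarrow> 'a::topological_space \<Rightarrow> 'a) \<Rightarrow> bool" where
  "semiflow T F \<longleftrightarrow> (T = range real \<or> T = {0..}) \<and>
     continuous_on (T \<times> UNIV) (\<lambda>(t, x). F t x) \<and>
     (\<forall>x. F 0 x = x) \<and>
     (\<forall>t1\<in>T. \<forall>t2\<in>T. \<forall>x. F (t1 + t2) x = F t2 (F t1 x))"

definition orbit :: "real set \<Rightarrow> (real \<Rightarrow> 'a \<Rightarrow> 'a) \<Rightarrow> 'a \<Rightarrow> 'a set" where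
  "orbit T F x = {F t x | t. t \<in> T}"

definition orbit_rel :: "real set \<Rightarrow> (real \<Rightarrow> 'a \<Rightarrow> 'a) \<Rightarrow> ('a \<times> 'a) set" where
  "orbit_rel T F = {(x, y). y \<in> orbit T F x}"

definition is_stream :: "real set \<Rightarrow> (real \<Rightarrow> 'a::topological_space \<Rightarrow> 'a) \<Rightarrow> ('a \<times> 'a) set \<Rightarrow> bool" where
  "is_stream T F S \<longleftrightarrow> refl S \<and> trans S \<and> closed S \<and> orbit_rel T F \<subseteq> S"

definition down :: "('a \<times> 'a) set \<Rightarrow> 'a \<Rightarrow> 'a set" where
  "down S x = {y. (x, y) \<in> S}"

definition is_omega_stream :: "real set \<Rightarrow> (real \<Rightarrow> 'a::topological_space \<Rightarrow> 'a) \<Rightarrow> ('a \<times> 'a) set \<Rightarrow> bool" where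
  "is_omega_stream T F S \<longleftrightarrow> is_stream T F S \<and>
     (\<forall>x. \<forall>y\<in>orbit T F x. down S x = orbit T F x \<union> down S y)"

definition stream_eq :: "('a \<times> 'a) set \<Rightarrow> 'a \<Rightarrow> 'a \<Rightarrow> bool" where
  "stream_eq S x y \<longleftrightarrow> (x, y) \<in> S \<and> (y, x) \<in> S"

definition recurrent :: "real set \<Rightarrow> (real \<Rightarrow> 'a \<Rightarrow> 'a) \<Rightarrow> ('a \<times> 'a) set \<Rightarrow> 'a set" where
  "recurrent T F S = {x. orbit T F x = {x} \<or> (\<exists>y. y \<noteq> x \<and> stream_eq S x y)}"

definition nodes :: "real set \<Rightarrow> (real \<Rightarrow> 'a \<Rightarrow> 'a) \<Rightarrow> ('a \<times> 'a) set \<Rightarrow> 'a set set" where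
  "nodes T F S = {{y \<in> recurrent T F S. stream_eq S x y} | x. x \<in> recurrent T F S}"

end

theory Submission
  imports Defs
begin

lemma T0: "T = range real \<or> T = {0..} \<Longrightarrow> 0 \<in> T"
  by (metis atLeast_iff order_refl of_nat_0 rangeI)

lemma T_nonneg: "T = range real \<or> T = {0..} \<Longrightarrow> a \<in> T \<Longrightarrow> 0 \<le> a"
  by auto

lemma T_add: "T = range real \<or> T = {0..} \<Longrightarrow> a \<in> T \<Longrightarrow> b \<in> T \<Longrightarrow> a + b \<in> T"
  by (metis (no_types, lifting) add_nonneg_nonneg atLeast_iff image_iff of_nat_add rangeI)

lemma T_diff: "T = range real \<or> T = {0..} \<Longrightarrow> a \<in> T \<Longrightarrow> b \<in> T \<Longrightarrow> b \<le> a \<Longrightarrow> a - b \<in> T"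
proof (elim disjE)
  assume T: "T = range real" and "a \<in> T" "b \<in> T" "b \<le> a"
  then obtain n m where "a = real n" "b = real m" by auto
  with \<open>b \<le> a\<close> have "a - b = real (n - m)" by (simp add: of_nat_diff)
  thus "a - b \<in> T" using T by simp
qed auto

lemma T_mult: "T = range real \<or> T = {0..} \<Longrightarrow> s \<in> T \<Longrightarrow> real k * s \<in> T"
proof (elim disjE)
  assume T: "T = range real" and "s \<in> T"
  then obtain n where "s = real n" by auto
  hence "real k * s = real (k * n)" by simp
  thus "real k * s \<in> T" using T by (metis rangeI)
qed auto

lemma sf_T: "semiflow T F \<Longrightarrow> T = range real \<or> T = {0..}"
  by (simp add: semiflow_def)

lemma sf_add: "semiflow T F \<Longrightarrow> a \<in> T \<Longrightarrow> b \<in> T \<Longrightarrow> F (a + b) x = F b (F a x)"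
  by (simp add: semiflow_def)

lemma sf_0: "semiflow T F \<Longrightarrow> F 0 x = x"
  by (simp add: semiflow_def)

lemma in_orbit: "t \<in> T \<Longrightarrow> F t x \<in> orbit T F x"
  by (auto simp: orbit_def)

lemma orbit_step:
  assumes sf: "semiflow T F" and "t \<in> T" "q \<in> T" "t \<le> q"
  shows "(F t x, F q x) \<in> orbit_rel T F"
proof -
  have T: "T = range real \<or> T = {0..}" using sf_T[OF sf] .
  have d: "q - t \<in> T" using T_diff[OF T] assms by auto
  have "F q x = F (q - t) (F t x)" using sf_add[OF sf assms(2) d, of x] by simp
  thus ?thesis using d by (auto simp: orbit_rel_def orbit_def)
qed

lemma key:
  assumes sf: "semiflow T F" and om: "is_omega_stream T F S"
    and xy: "(x, y) \<in> S" and yx: "(y, x) \<in> S" and ne: "y \<noteq> x" and tT: "t \<in> T"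
  shows "(F t x, x) \<in> S"
proof -
  have T: "T = range real \<or> T = {0..}" using sf_T[OF sf] .
  have st: "is_stream T F S" and O: "\<And>u v. v \<in> orbit T F u \<Longrightarrow> down S u = orbit T F u \<union> down S v"
    using om by (auto simp: is_omega_stream_def)
  have tr: "trans S" and rf: "refl S" and sub: "orbit_rel T F \<subseteq> S"
    using st by (auto simp: is_stream_def)
  have "y \<in> down S x" using xy by (simp add: down_def)
  hence "y \<in> orbit T F x \<union> down S (F t x)" using O[OF in_orbit[OF tT, of F x]] by simp
  then show ?thesis
  proof
    assume "y \<in> down S (F t x)"
    thus ?thesis using yx tr by (auto simp: down_def dest: transD)
  next
    assume "y \<in> orbit T F x"
    then obtain s where sT: "s \<in> T" and ys: "y = F s x" unfolding orbit_def by blast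
    have "s \<noteq> 0" using ne ys sf_0[OF sf] by auto
    hence spos: "s > 0" using T_nonneg[OF T sT] by auto
    have claim: "\<forall>k::nat. (F (real k * s) x, x) \<in> S \<or> (\<exists>p. p \<in> T \<and> p > 0 \<and> F p x = x)"
    proof
      fix k :: nat
      show "(F (real k * s) x, x) \<in> S \<or> (\<exists>p. p \<in> T \<and> p > 0 \<and> F p x = x)"
      proof (induction k)
        case 0
        then show ?case using rf sf_0[OF sf] by (auto simp: refl_on_def)
      next
        case (Suc k)
        show ?case
        proof (cases "(F (real k * s) x, x) \<in> S")
          case False then show ?thesis using Suc by auto
        next
          case True
          define u where "u = F (real k * s) x"
          have kT: "real k * s \<in> T" using T_mult[OF T sT] .
          have v: "F s u = F (real (Suc k) * s) x"
            using sf_add[OF sf kT sT, of x] by (simp add: u_def algebra_simps)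
          have "x \<in> down S u" using True by (simp add: down_def u_def)
          hence "x \<in> orbit T F u \<union> down S (F s u)" using O[OF in_orbit[OF sT, of F u]] by simp
          then show ?thesis
          proof
            assume "x \<in> down S (F s u)"
            thus ?thesis using v by (simp add: down_def)
          next
            assume "x \<in> orbit T F u"
            then obtain r where rT: "r \<in> T" and xr: "x = F r u" unfolding orbit_def by blast
            have e0: "F (real k * s + r) x = F r u" using sf_add[OF sf kT rT, of x] u_def by simp
            have e: "F (real k * s + r) x = x" using e0 xr by simp
            show ?thesis
            proof (cases "real k * s + r > 0")
              case True
              then show ?thesis using e T_add[OF T kT rT] by blast
            next
              case False
              have "real k * s \<ge> 0" "r \<ge> 0" using T_nonneg[OF T kT] T_nonneg[OF T rT] .
              hence "real k * s = 0" using False by linarith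
              hence "k = 0" using spos by simp
              then show ?thesis using yx ys by simp
            qed
          qed
        qed
      qed
    qed
    obtain k :: nat where kt: "t \<le> real k * s"
    proof -
      obtain k :: nat where "t / s \<le> real k" using real_arch_simple by blast
      hence "t \<le> real k * s" using spos by (simp add: field_simps)
      thus ?thesis using that by blast
    qed
    show ?thesis
    proof (cases "(F (real k * s) x, x) \<in> S")
      case True
      have "(F t x, F (real k * s) x) \<in> S"
        using orbit_step[OF sf tT T_mult[OF T sT] kt] sub by blast
      thus ?thesis using True tr by (auto dest: transD)
    next
      case False
      then obtain p where pT: "p \<in> T" and pp: "p > 0" and px: "F p x = x" using claim by blast
      have per: "F (real m * p) x = x" for m :: nat
      proof (induction m)
        case 0 then show ?case using sf_0[OF sf] by simp
      next
        case (Suc m)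
        have "F (real m * p + p) x = F p (F (real m * p) x)"
          using sf_add[OF sf T_mult[OF T pT] pT] .
        then show ?case using Suc px by (simp add: algebra_simps)
      qed
      obtain m :: nat where mt: "t \<le> real m * p"
      proof -
        obtain m :: nat where "t / p \<le> real m" using real_arch_simple by blast
        hence "t \<le> real m * p" using pp by (simp add: field_simps)
        thus ?thesis using that by blast
      qed
      have "(F t x, F (real m * p) x) \<in> orbit_rel T F"
        using orbit_step[OF sf tT T_mult[OF T pT] mt] .
      thus ?thesis using per sub by auto
    qed
  qed
qed

theorem proposition27:
  fixes T :: "real set" and F :: "real \<Rightarrow> 'a::metric_space \<Rightarrow> 'a"
    and I :: "'i set" and S :: "'i \<Rightarrow> ('a \<times> 'a) set"
  assumes "semiflow T F"
    and "connected (UNIV :: 'a set)"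
    and "\<forall>\<alpha>\<in>I. is_omega_stream T F (S \<alpha>)"
  shows "is_omega_stream T F (\<Inter>\<alpha>\<in>I. S \<alpha>)
    \<and> recurrent T F (\<Inter>\<alpha>\<in>I. S \<alpha>) = (\<Inter>\<alpha>\<in>I. recurrent T F (S \<alpha>))
    \<and> (\<forall>N\<in>nodes T F (\<Inter>\<alpha>\<in>I. S \<alpha>).
         (\<forall>\<alpha>\<in>I. \<exists>!M. M \<in> nodes T F (S \<alpha>) \<and> N \<subseteq> M)
         \<and> N = (\<Inter>\<alpha>\<in>I. THE M. M \<in> nodes T F (S \<alpha>) \<and> N \<subseteq> M))"
proof -
  let ?S = "\<Inter>\<alpha>\<in>I. S \<alpha>"
  have sf: "semiflow T F" using assms(1) .
  have T: "T = range real \<or> T = {0..}" using sf_T[OF sf] .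
  have st: "\<And>a. a \<in> I \<Longrightarrow> is_stream T F (S a)" using assms(3) by (auto simp: is_omega_stream_def)
  have Om: "\<And>a u v. a \<in> I \<Longrightarrow> v \<in> orbit T F u \<Longrightarrow> down (S a) u = orbit T F u \<union> down (S a) v"
    using assms(3) by (auto simp: is_omega_stream_def)
  have rf: "\<And>a. a \<in> I \<Longrightarrow> refl (S a)" and tr: "\<And>a. a \<in> I \<Longrightarrow> trans (S a)"
    and cl: "\<And>a. a \<in> I \<Longrightarrow> closed (S a)" and sub: "\<And>a. a \<in> I \<Longrightarrow> orbit_rel T F \<subseteq> S a"
    using st by (auto simp: is_stream_def)
  have P1: "is_omega_stream T F ?S"
    unfolding is_omega_stream_def is_stream_def
  proof (intro conjI allI ballI)
    show "refl ?S" using rf by (auto simp: refl_on_def)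
    show "trans ?S" using tr by (auto simp: trans_def)
    show "closed ?S" using cl by (simp add: closed_INT)
    show "orbit_rel T F \<subseteq> ?S" using sub by blast
    fix u v assume v: "v \<in> orbit T F u"
    show "down ?S u = orbit T F u \<union> down ?S v"
    proof
      show "down ?S u \<subseteq> orbit T F u \<union> down ?S v"
        using Om[OF _ v] by (auto simp: down_def)
      show "orbit T F u \<union> down ?S v \<subseteq> down ?S u"
        using Om[OF _ v] by (auto simp: down_def)
    qed
  qed
  have P2: "recurrent T F ?S = (\<Inter>\<alpha>\<in>I. recurrent T F (S \<alpha>))"
  proof
    show "recurrent T F ?S \<subseteq> (\<Inter>\<alpha>\<in>I. recurrent T F (S \<alpha>))"
      by (auto simp: recurrent_def stream_eq_def)
    show "(\<Inter>\<alpha>\<in>I. recurrent T F (S \<alpha>)) \<subseteq> recurrent T F ?S"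
    proof
      fix x assume xR: "x \<in> (\<Inter>\<alpha>\<in>I. recurrent T F (S \<alpha>))"
      show "x \<in> recurrent T F ?S"
      proof (cases "orbit T F x = {x}")
        case True then show ?thesis by (simp add: recurrent_def)
      next
        case False
        have "x \<in> orbit T F x" using in_orbit[OF T0[OF T], of F x] sf_0[OF sf] by simp
        then obtain z where zO: "z \<in> orbit T F x" and zx: "z \<noteq> x" using False by blast
        then obtain t where tT: "t \<in> T" and zt: "z = F t x" by (auto simp: orbit_def)
        have "stream_eq (S a) x z" if aI: "a \<in> I" for a
        proof -
          from xR aI False obtain y where "y \<noteq> x" "stream_eq (S a) x y"
            by (auto simp: recurrent_def)
          hence "(F t x, x) \<in> S a"
            using key[OF sf _ _ _ _ tT] assms(3) aI by (auto simp: stream_eq_def)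
          moreover have "(x, z) \<in> S a" using zO sub[OF aI] by (auto simp: orbit_rel_def)
          ultimately show ?thesis using zt by (simp add: stream_eq_def)
        qed
        then show ?thesis using zx by (auto simp: recurrent_def stream_eq_def)
      qed
    qed
  qed
  have P3: "\<forall>N\<in>nodes T F ?S.
         (\<forall>\<alpha>\<in>I. \<exists>!M. M \<in> nodes T F (S \<alpha>) \<and> N \<subseteq> M)
         \<and> N = (\<Inter>\<alpha>\<in>I. THE M. M \<in> nodes T F (S \<alpha>) \<and> N \<subseteq> M)"
  proof
    fix N assume "N \<in> nodes T F ?S"
    then obtain x where xR: "x \<in> recurrent T F ?S" and N: "N = {y \<in> recurrent T F ?S. stream_eq ?S x y}"
      by (auto simp: nodes_def)
    define M where "M a = {y \<in> recurrent T F (S a). stream_eq (S a) x y}" for a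
    have xRa: "\<And>a. a \<in> I \<Longrightarrow> x \<in> recurrent T F (S a)" using xR P2 by auto
    have uniq: "\<And>a. a \<in> I \<Longrightarrow> M a \<in> nodes T F (S a) \<and> N \<subseteq> M a \<and>
        (\<forall>M'. M' \<in> nodes T F (S a) \<and> N \<subseteq> M' \<longrightarrow> M' = M a)"
    proof -
      fix a assume aI: "a \<in> I"
      have m1: "M a \<in> nodes T F (S a)" using xRa[OF aI] by (auto simp: nodes_def M_def)
      have m2: "N \<subseteq> M a" using N P2 aI by (auto simp: M_def stream_eq_def)
      have xN: "x \<in> N" using N xR P1 by (auto simp: stream_eq_def is_omega_stream_def is_stream_def refl_on_def)
      have m3: "M' = M a" if "M' \<in> nodes T F (S a)" "N \<subseteq> M'" for M'
      proof -
        from that(1) obtain x' where M': "M' = {y \<in> recurrent T F (S a). stream_eq (S a) x' y}"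
          by (auto simp: nodes_def)
        have "stream_eq (S a) x' x" using xN that(2) M' by auto
        thus ?thesis using M' tr[OF aI] unfolding M_def stream_eq_def
          by (auto dest: transD)
      qed
      show "M a \<in> nodes T F (S a) \<and> N \<subseteq> M a \<and>
        (\<forall>M'. M' \<in> nodes T F (S a) \<and> N \<subseteq> M' \<longrightarrow> M' = M a)" using m1 m2 m3 by blast
    qed
    have the: "\<And>a. a \<in> I \<Longrightarrow> (THE M'. M' \<in> nodes T F (S a) \<and> N \<subseteq> M') = M a"
      using uniq by (intro the_equality) blast+
    show "(\<forall>\<alpha>\<in>I. \<exists>!M. M \<in> nodes T F (S \<alpha>) \<and> N \<subseteq> M)
         \<and> N = (\<Inter>\<alpha>\<in>I. THE M. M \<in> nodes T F (S \<alpha>) \<and> N \<subseteq> M)"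
    proof
      show "\<forall>\<alpha>\<in>I. \<exists>!M. M \<in> nodes T F (S \<alpha>) \<and> N \<subseteq> M" using uniq by blast
      have "(\<Inter>\<alpha>\<in>I. THE M. M \<in> nodes T F (S \<alpha>) \<and> N \<subseteq> M) = (\<Inter>\<alpha>\<in>I. M \<alpha>)"
        using the by simp
      also have "\<dots> = N"
      proof
        show "N \<subseteq> (\<Inter>\<alpha>\<in>I. M \<alpha>)" using uniq by blast
        show "(\<Inter>\<alpha>\<in>I. M \<alpha>) \<subseteq> N"
          using P2 unfolding N M_def stream_eq_def by blast
      qed
      finally show "N = (\<Inter>\<alpha>\<in>I. THE M. M \<in> nodes T F (S \<alpha>) \<and> N \<subseteq> M)" by simp
    qed
  qed
  show ?thesis using P1 P2 P3 by blast
qed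

end
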